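(* Let $(\rho,\mu,\nu)$ be a regular triple of standard representations of $\mathcal{W}_N$ and $a,c\in\mathbb{Z}/N$. Then, as $N^2\times N^2$ matrices, $$R(\rho,\mu,\nu|a,c)=(y_{\rho\mu}y_{\mu\nu})^P\,\omega^{ac/2}\;Y_1^{-a}Z_1^{-c}\,R(\rho,\mu,\nu)\,Z_1^{c}Z_2^{-a},$$ where $Y_1=Y\otimes\mathrm{id}$, $Z_1=Z\otimes\mathrm{id}$, $Z_2=\mathrm{id}\otimes Z$.
   Context: $N\ge3$ odd, $N=2P+1$, $\omega=e^{2\pi i/N}$; for integers $r,s$ with $s$ invertible mod $N$, $\omega^{r/s}:=\omega^{rs'}$, $ss'\equiv1\pmod N$ (so $\omega^{1/2}=\omega^{P+1}$). Indices run over $\mathbb{Z}/N$; $\delta(n)=1$ if $n\equiv0\pmod N$, else $0$. $X,Z,Y$ are the $N\times N$ matrices $X_{ij}=\delta(i-j-1)$, $Z_{ij}=\omega^i\delta(i-j)$, $Y=\omega^{1/2}XZ$, i.e. $Y_{ij}=\omega^{1/2+j}\delta(i-j-1)$. $\mathcal{W}_N$: unital $\mathbb{C}$-algebra generated by $E,E^{-1},D$ with $EE^{-1}=E^{-1}E=1$, $ED=\omega DE$, $\Delta(E)=E\otimes E$, $\Delta(D)=E\otimes D+D\otimes1$; tensor products via $\Delta$; cyclic = $E,D$ act invertibly; regular = every tensor product of consecutive terms cyclic. The standard representation with parameters $(a_\rho,y_\rho)\in(\mathbb{C}^* )^2$ is $\rho(E)=a_\rho^2Z$, $\rho(D)=a_\rho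 y_\rho X$. A determination $u\mapsto u^{1/N}$ of the $N$-th root is fixed; $\rho\mu$ has $a_{\rho\mu}=a_\rho a_\mu$, $y_{\rho\mu}=(a_\rho^Ny_\mu^N+y_\rho^Na_\mu^{-N})^{1/N}$; products are associative. Standing convention: $-\frac{y_\rho y_\nu}{y_{\rho\mu\nu}y_\mu}=r\big(\frac{y_{\rho\mu}y_{\mu\nu}}{y_{\rho\mu\nu}y_\mu}\big)$. Functions: for $x^N+y^N=z^N$, $\omega(x,y,z|n)=\prod_{j=1}^n\frac{y}{z-x\omega^j}$ ($0\le n\le N-1$), extended $N$-periodically; $\omega(x,y,z|m,n)=\omega(x,y,z|m-n)\omega^{n^2/2}$. $g(x)=\prod_{j=1}^{N-1}(1-x\omega^j)^{j/N}$, $r(x)=(1-x^N)^{1/N}$ (analytic continuations from $0$ to $\mathbb{C}\setminus\{|x|\ge1,\arg x\in\theta+\frac{2\pi}{N}\mathbb{Z}\}$, $\theta$ fixed so $g$ avoids the cuts); $h(x)=x^{-P}g(x)/g(1)$. $R(\rho,\mu,\nu)^{\gamma,\delta}_{\alpha,\beta}=h\big(\frac{y_{\rho\mu}y_{\mu\nu}}{y_{\rho\mu\nu}y_\mu}\big)\omega^{\alpha\delta}\omega(y_{\rho\mu\nu}y_\mu,y_\rho y_\nu,y_{\rho\mu}y_{\mu\nu}|\gamma,\alpha)\delta(\gamma+\delta-\beta)$; $R(\rho,\mu,\nu|a,c)^{\gamma,\delta}_{\alpha,\beta}=(y_{\rho\mu}y_{\mu\nu})^P\omega^{c(\gamma-\alpha)-ac/2}R(\rho,\mu,\nu)^{\gamma-a,\delta}_{\alpha,\beta-a}$.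 Matrix convention: an array $M^{\gamma,\delta}_{\alpha,\beta}$ is the $N^2\times N^2$ matrix with entry $M^{\gamma,\delta}_{\alpha,\beta}$ in row $(\alpha,\beta)$ and column $(\gamma,\delta)$; $A\otimes B$ has entry $A_{\alpha\gamma}B_{\beta\delta}$ in row $(\alpha,\beta)$, column $(\gamma,\delta)$; products are matrix products. *)

theory Defs
  imports "HOL-Analysis.Analysis"
begin

definition om :: "nat \<Rightarrow> int \<Rightarrow> complex" where
  "om N k = cis (2 * pi * of_int k / of_nat N)"

text \<open>P with N = 2P+1.\<close>
definition PP :: "nat \<Rightarrow> nat" where
  "PP N = (N - 1) div 2"

text \<open>omega^(k/2) := omega^(k * s') with 2 s' = 1 mod N, s' = P+1.\<close>
definition om_half :: "nat \<Rightarrow> int \<Rightarrow> complex" where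
  "om_half N k = om N (k * (int (PP N) + 1))"

definition dlt :: "nat \<Rightarrow> int \<Rightarrow> complex" where
  "dlt N n = (if n mod int N = 0 then 1 else 0)"

type_synonym 'i mat = "'i \<Rightarrow> 'i \<Rightarrow> complex"

definition Idx :: "nat \<Rightarrow> int set" where
  "Idx N = {0..<int N}"

definition mmult :: "'i set \<Rightarrow> 'i mat \<Rightarrow> 'i mat \<Rightarrow> 'i mat" where
  "mmult I A B = (\<lambda>i k. \<Sum>j\<in>I. A i j * B j k)"

definition idm :: "'i mat" where
  "idm = (\<lambda>i j. if i = j then 1 else 0)"

definition is_inverse_on :: "'i set \<Rightarrow> 'i mat \<Rightarrow> 'i mat \<Rightarrow> bool" where
  "is_inverse_on I A B \<longleftrightarrow>
     (\<forall>i\<in>I. \<forall>k\<in>I. mmult I A B i k = idm i k \<and> mmult I B A i k = idm i k)"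

definition invertible_on :: "'i set \<Rightarrow> 'i mat \<Rightarrow> bool" where
  "invertible_on I A \<longleftrightarrow> (\<exists>B. is_inverse_on I A B)"

definition minv :: "'i set \<Rightarrow> 'i mat \<Rightarrow> 'i mat" where
  "minv I A = (SOME B. is_inverse_on I A B)"

fun mpow :: "'i set \<Rightarrow> 'i mat \<Rightarrow> nat \<Rightarrow> 'i mat" where
  "mpow I A 0 = idm"
| "mpow I A (Suc n) = mmult I (mpow I A n) A"

definition ipow :: "'i set \<Rightarrow> 'i mat \<Rightarrow> int \<Rightarrow> 'i mat" where
  "ipow I A k = (if k \<ge> 0 then mpow I A (nat k) else mpow I (minv I A) (nat (- k)))"

definition kron :: "'i mat \<Rightarrow> 'j mat \<Rightarrow> ('i \<times> 'j) mat" where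
  "kron A B = (\<lambda>(i1, i2) (j1, j2). A i1 j1 * B i2 j2)"

definition Xm :: "nat \<Rightarrow> int mat" where
  "Xm N = (\<lambda>i j. dlt N (i - j - 1))"

definition Zm :: "nat \<Rightarrow> int mat" where
  "Zm N = (\<lambda>i j. om N i * dlt N (i - j))"

definition Ym :: "nat \<Rightarrow> int mat" where
  "Ym N = (\<lambda>i j. om_half N 1 * om N j * dlt N (i - j - 1))"

text \<open>A representation is given by the pair of matrices (image of E, image of D).\<close>
type_synonym 'i rep = "'i mat \<times> 'i mat"

definition std_rep :: "nat \<Rightarrow> complex \<Rightarrow> complex \<Rightarrow> int rep" where
  "std_rep N a y = ((\<lambda>i j. a^2 * Zm N i j), (\<lambda>i j. a * y * Xm N i j))"

text \<open>Tensor product via Delta(E) = E (x) E, Delta(D) = E (x) D + D (x) 1.\<close>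
definition tensor_rep :: "'i rep \<Rightarrow> 'j rep \<Rightarrow> ('i \<times> 'j) rep" where
  "tensor_rep r s = (kron (fst r) (fst s),
                     (\<lambda>p q. kron (fst r) (snd s) p q + kron (snd r) idm p q))"

definition cyclic_rep :: "'i set \<Rightarrow> 'i rep \<Rightarrow> bool" where
  "cyclic_rep I r \<longleftrightarrow> invertible_on I (fst r) \<and> invertible_on I (snd r)"

definition regular_triple :: "nat \<Rightarrow> int rep \<Rightarrow> int rep \<Rightarrow> int rep \<Rightarrow> bool" where
  "regular_triple N r m n \<longleftrightarrow>
     cyclic_rep (Idx N) r \<and> cyclic_rep (Idx N) m \<and> cyclic_rep (Idx N) n \<and>
     cyclic_rep (Idx N \<times> Idx N) (tensor_rep r m) \<and>
     cyclic_rep (Idx N \<times> Idx N) (tensor_rep m n) \<and>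
     cyclic_rep ((Idx N \<times> Idx N) \<times> Idx N) (tensor_rep (tensor_rep r m) n)"

text \<open>y_{rho mu} = (a_rho^N y_mu^N + y_rho^N a_mu^(-N))^(1/N), with a fixed
  determination rt of the N-th root.\<close>
definition yprod :: "nat \<Rightarrow> (complex \<Rightarrow> complex) \<Rightarrow> complex \<Rightarrow> complex \<Rightarrow> complex \<Rightarrow> complex \<Rightarrow> complex" where
  "yprod N rt a1 y1 a2 y2 = rt (a1 ^ N * y2 ^ N + y1 ^ N * inverse (a2 ^ N))"

definition omg :: "nat \<Rightarrow> complex \<Rightarrow> complex \<Rightarrow> complex \<Rightarrow> int \<Rightarrow> complex" where
  "omg N x y z n = (\<Prod>j\<in>{1..n mod int N}. y / (z - x * om N j))"

definition omg2 :: "nat \<Rightarrow> complex \<Rightarrow> complex \<Rightarrow> complex \<Rightarrow> int \<Rightarrow> int \<Rightarrow> complex" where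
  "omg2 N x y z m n = omg N x y z (m - n) * om_half N (n^2)"

text \<open>g and r: analytic continuation from 0 along radial segments in the slit
  (star-shaped) domain; along a segment starting at 1 the continuous logarithm of
  1 - t x omega^j (resp. 1 - t^N x^N) is the principal one, so these are given by
  principal-branch complex powers.\<close>
definition gfun :: "nat \<Rightarrow> complex \<Rightarrow> complex" where
  "gfun N x = (\<Prod>j\<in>{1..int N - 1}. (1 - x * om N j) powr (of_int j / of_nat N))"

definition rfun :: "nat \<Rightarrow> complex \<Rightarrow> complex" where
  "rfun N x = (1 - x ^ N) powr (1 / of_nat N)"

definition hfun :: "nat \<Rightarrow> complex \<Rightarrow> complex" where
  "hfun N x = inverse (x ^ PP N) * gfun N x / gfun N 1"

text \<open>Arrays M^{gamma,delta}_{alpha,beta} are matrices on index pairs: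
  row (alpha,beta), column (gamma,delta).\<close>
definition Rmat :: "nat \<Rightarrow> (complex \<Rightarrow> complex) \<Rightarrow> complex \<Rightarrow> complex \<Rightarrow> complex \<Rightarrow> complex
    \<Rightarrow> complex \<Rightarrow> complex \<Rightarrow> (int \<times> int) mat" where
  "Rmat N rt ar yr am ym an yn = (\<lambda>(\<alpha>, \<beta>) (\<gamma>, \<delta>).
     (let yrm = yprod N rt ar yr am ym;
          ymn = yprod N rt am ym an yn;
          yrmn = yprod N rt (ar * am) yrm an yn
      in hfun N (yrm * ymn / (yrmn * ym)) * om N (\<alpha> * \<delta>)
         * omg2 N (yrmn * ym) (yr * yn) (yrm * ymn) \<gamma> \<alpha> * dlt N (\<gamma> + \<delta> - \<beta>)))"

definition Rmat_ac :: "nat \<Rightarrow> (complex \<Rightarrow> complex) \<Rightarrow> complex \<Rightarrow> complex \<Rightarrow> complex \<Rightarrow> complex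
    \<Rightarrow> complex \<Rightarrow> complex \<Rightarrow> int \<Rightarrow> int \<Rightarrow> (int \<times> int) mat" where
  "Rmat_ac N rt ar yr am ym an yn a c = (\<lambda>(\<alpha>, \<beta>) (\<gamma>, \<delta>).
     (let yrm = yprod N rt ar yr am ym;
          ymn = yprod N rt am ym an yn
      in (yrm * ymn) ^ PP N * (om N (c * (\<gamma> - \<alpha>)) * om_half N (- (a * c)))
         * Rmat N rt ar yr am ym an yn (\<alpha>, \<beta> - a) (\<gamma> - a, \<delta>)))"

end

theory Submission
  imports Defs
begin

definition eqon :: "'i set \<Rightarrow> 'i mat \<Rightarrow> 'i mat \<Rightarrow> bool" where
  "eqon I A B \<longleftrightarrow> (\<forall>i\<in>I. \<forall>j\<in>I. A i j = B i j)"

lemma om_add: "om N (x + y) = om N x * om N y"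
  unfolding om_def by (simp add: cis_mult add_divide_distrib distrib_left)

lemma om_zero[simp]: "om N 0 = 1"
  unfolding om_def by simp

lemma om_period: assumes "N > 0" shows "om N (x + int N * k) = om N x"
proof -
  have "om N (x + int N * k) = om N x * om N (int N * k)" by (rule om_add)
  moreover have "om N (int N * k) = 1"
  proof -
    have "2 * pi * of_int (int N * k) / of_nat N = 2 * pi * real_of_int k" using assms by simp
    then show ?thesis unfolding om_def by (simp add: cis_multiple_2pi)
  qed
  ultimately show ?thesis by simp
qed

lemma om_cong: assumes "N > 0" "x mod int N = y mod int N" shows "om N x = om N y"
proof -
  from assms(2) have "int N dvd x - y" by (simp add: mod_eq_dvd_iff)
  then obtain k where "x - y = int N * k" by blast
  then have "x = y + int N * k" by simp
  then show ?thesis using om_period[OF assms(1)] by simp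
qed

lemma dlt_cong: "x mod int N = y mod int N \<Longrightarrow> dlt N x = dlt N y"
  unfolding dlt_def by simp

lemma dlt_sym: "dlt N (x - y) = dlt N (y - x)"
  unfolding dlt_def by (metis dvd_eq_mod_eq_0 dvd_diff_commute)

lemma sum_dlt:
  assumes "N > 0"
  shows "(\<Sum>j\<in>Idx N. f j * dlt N (j - t)) = f (t mod int N)"
proof -
  have "(\<Sum>j\<in>Idx N. f j * dlt N (j - t)) = (\<Sum>j\<in>Idx N. if j = t mod int N then f j else 0)"
  proof (rule sum.cong)
    fix j assume "j \<in> Idx N"
    then have j: "0 \<le> j" "j < int N" by (auto simp: Idx_def)
    have "(j - t) mod int N = 0 \<longleftrightarrow> j mod int N = t mod int N"
      by (simp add: mod_eq_dvd_iff dvd_eq_mod_eq_0[symmetric])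
    also have "j mod int N = j" using j by simp
    finally show "f j * dlt N (j - t) = (if j = t mod int N then f j else 0)"
      unfolding dlt_def by auto
  qed simp
  also have "\<dots> = f (t mod int N)"
    using assms by (simp add: Idx_def)
  finally show ?thesis .
qed

lemma mmult_assoc: assumes "finite I"
  shows "mmult I (mmult I A B) C = mmult I A (mmult I B C)"
  unfolding mmult_def
  by (auto simp: sum_distrib_left sum_distrib_right mult.assoc intro!: ext sum.swap[where A=I and B=I, simplified])

lemma eqon_refl[simp]: "eqon I A A" unfolding eqon_def by simp
lemma eqon_sym: "eqon I A B \<Longrightarrow> eqon I B A" unfolding eqon_def by simp
lemma eqon_trans: "eqon I A B \<Longrightarrow> eqon I B C \<Longrightarrow> eqon I A C" unfolding eqon_def by simp

lemma mmult_eqon_cong: "eqon I A A' \<Longrightarrow> eqon I B B' \<Longrightarrow> eqon I (mmult I A B) (mmult I A' B')"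
  unfolding eqon_def mmult_def by (auto intro!: sum.cong)

lemma mmult_idm_right: "finite I \<Longrightarrow> eqon I (mmult I A idm) A"
  unfolding eqon_def mmult_def idm_def by (auto simp: if_distrib cong: if_cong)

lemma mmult_idm_left: assumes "finite I" shows "eqon I (mmult I idm A) A"
  unfolding eqon_def mmult_def idm_def
proof (intro ballI)
  fix i k assume "i \<in> I" "k \<in> I"
  have "(\<Sum>j\<in>I. (if i = j then 1 else 0) * A j k) = (\<Sum>j\<in>I. if i = j then A j k else 0)"
    by (rule sum.cong) auto
  also have "\<dots> = A i k" using assms \<open>i \<in> I\<close> by simp
  finally show "(\<Sum>j\<in>I. (if i = j then 1 else 0) * A j k) = A i k" .
qed

lemmas [trans] = eqon_trans

lemma mpow_family:
  assumes "finite I" "\<And>m n. eqon I (mmult I (F m) (F n)) (F (m+n))"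
    "eqon I (F 0) idm" "eqon I A (F k)"
  shows "eqon I (mpow I A n) (F (int n * k))"
proof (induction n)
  case 0 then show ?case using assms(3) by (simp add: eqon_sym)
next
  case (Suc n)
  have "eqon I (mmult I (mpow I A n) A) (mmult I (F (int n * k)) (F k))"
    by (rule mmult_eqon_cong[OF Suc assms(4)])
  also note assms(2)
  finally show ?case by (simp add: algebra_simps)
qed

lemma ipow_family:
  assumes fin: "finite I" and fam: "\<And>m n. eqon I (mmult I (F m) (F n)) (F (m+n))"
    and F0: "eqon I (F 0) idm" and A1: "eqon I A (F 1)"
  shows "eqon I (ipow I A k) (F k)"
proof (cases "k \<ge> 0")
  case True
  then show ?thesis unfolding ipow_def using mpow_family[OF fin fam F0 A1, of "nat k"] by simp
next
  case False
  define B where "B = F (-1)"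
  have AB: "eqon I (mmult I A B) idm"
  proof -
    have "eqon I (mmult I A B) (mmult I (F 1) (F (-1)))" unfolding B_def by (rule mmult_eqon_cong[OF A1]) simp
    also have "eqon I \<dots> (F 0)" using fam[of 1 "-1"] by simp
    also note F0
    finally show ?thesis .
  qed
  have BA: "eqon I (mmult I B A) idm"
  proof -
    have "eqon I (mmult I B A) (mmult I (F (-1)) (F 1))" unfolding B_def by (rule mmult_eqon_cong[OF _ A1]) simp
    also have "eqon I \<dots> (F 0)" using fam[of "-1" 1] by simp
    also note F0
    finally show ?thesis .
  qed
  have "is_inverse_on I A B" using AB BA unfolding is_inverse_on_def eqon_def by auto
  then have inv: "is_inverse_on I A (minv I A)" unfolding minv_def by (rule someI[where P="is_inverse_on I A"])
  define M where "M = minv I A"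
  have MA: "eqon I (mmult I M A) idm" using inv unfolding is_inverse_on_def eqon_def M_def by auto
  have "eqon I M (mmult I M idm)" by (rule eqon_sym[OF mmult_idm_right[OF fin]])
  also have "eqon I \<dots> (mmult I M (mmult I A B))" by (rule mmult_eqon_cong[OF eqon_refl eqon_sym[OF AB]])
  also have "mmult I M (mmult I A B) = mmult I (mmult I M A) B" by (rule mmult_assoc[OF fin, symmetric])
  also have "eqon I \<dots> (mmult I idm B)" by (rule mmult_eqon_cong[OF MA eqon_refl])
  also have "eqon I \<dots> B" by (rule mmult_idm_left[OF fin])
  finally have MB: "eqon I M (F (-1))" unfolding B_def .
  show ?thesis unfolding ipow_def using False mpow_family[OF fin fam F0 MB, of "nat (-k)"] by (simp add: M_def)
qed

lemma sum_idm_l: assumes "finite I" "b \<in> I"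
  shows "(\<Sum>j\<in>I. idm b j * f j) = f b"
proof -
  have "(\<Sum>j\<in>I. idm b j * f j) = (\<Sum>j\<in>I. if b = j then f j else 0)"
    by (rule sum.cong) (auto simp: idm_def)
  then show ?thesis using assms by simp
qed

lemma sum_idm_r: assumes "finite I" "b \<in> I"
  shows "(\<Sum>j\<in>I. f j * idm j b) = f b"
proof -
  have "(\<Sum>j\<in>I. f j * idm j b) = (\<Sum>j\<in>I. if b = j then f j else 0)"
    by (rule sum.cong) (auto simp: idm_def)
  then show ?thesis using assms by simp
qed

lemma kron_left1: assumes "finite I" "b \<in> I"
  shows "mmult (I \<times> I) (kron A idm) M (a, b) q = (\<Sum>j\<in>I. A a j * M (j, b) q)"
proof -
  have "mmult (I \<times> I) (kron A idm) M (a, b) q = (\<Sum>j1\<in>I. \<Sum>j2\<in>I. A a j1 * (idm b j2 * M (j1, j2) q))"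
    unfolding mmult_def kron_def sum.cartesian_product by (intro sum.cong) (auto simp: mult_ac)
  also have "\<dots> = (\<Sum>j\<in>I. A a j * M (j, b) q)"
    by (rule sum.cong) (simp_all add: sum_distrib_left[symmetric] sum_idm_l[OF assms])
  finally show ?thesis .
qed

lemma kron_left2: assumes "finite I" "a \<in> I"
  shows "mmult (I \<times> I) (kron idm A) M (a, b) q = (\<Sum>j\<in>I. A b j * M (a, j) q)"
proof -
  have "mmult (I \<times> I) (kron idm A) M (a, b) q = (\<Sum>j1\<in>I. \<Sum>j2\<in>I. idm a j1 * (A b j2 * M (j1, j2) q))"
    unfolding mmult_def kron_def sum.cartesian_product by (intro sum.cong) (auto simp: mult_ac)
  also have "\<dots> = (\<Sum>j2\<in>I. \<Sum>j1\<in>I. idm a j1 * (A b j2 * M (j1, j2) q))"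
    by (rule sum.swap)
  also have "\<dots> = (\<Sum>j\<in>I. A b j * M (a, j) q)"
    by (rule sum.cong) (simp_all add: sum_idm_l[OF assms])
  finally show ?thesis .
qed

lemma kron_right1: assumes "finite I" "d \<in> I"
  shows "mmult (I \<times> I) M (kron A idm) p (c, d) = (\<Sum>j\<in>I. M p (j, d) * A j c)"
proof -
  have "mmult (I \<times> I) M (kron A idm) p (c, d) = (\<Sum>j1\<in>I. \<Sum>j2\<in>I. (M p (j1, j2) * A j1 c) * idm j2 d)"
    unfolding mmult_def kron_def sum.cartesian_product by (intro sum.cong) (auto simp: mult_ac)
  also have "\<dots> = (\<Sum>j\<in>I. M p (j, d) * A j c)"
    by (rule sum.cong) (simp_all add: sum_idm_r[OF assms])
  finally show ?thesis .
qed

lemma kron_right2: assumes "finite I" "c \<in> I"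
  shows "mmult (I \<times> I) M (kron idm A) p (c, d) = (\<Sum>j\<in>I. M p (c, j) * A j d)"
proof -
  have "mmult (I \<times> I) M (kron idm A) p (c, d) = (\<Sum>j1\<in>I. \<Sum>j2\<in>I. (M p (j1, j2) * A j2 d) * idm j1 c)"
    unfolding mmult_def kron_def sum.cartesian_product by (intro sum.cong) (auto simp: mult_ac)
  also have "\<dots> = (\<Sum>j2\<in>I. \<Sum>j1\<in>I. (M p (j1, j2) * A j2 d) * idm j1 c)"
    by (rule sum.swap)
  also have "\<dots> = (\<Sum>j\<in>I. M p (c, j) * A j d)"
    by (rule sum.cong) (simp_all add: sum_idm_r[OF assms])
  finally show ?thesis .
qed

definition hh :: "nat \<Rightarrow> int" where "hh N = int (PP N) + 1"
definition Zk :: "nat \<Rightarrow> int \<Rightarrow> int mat" where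
  "Zk N k = (\<lambda>i j. om N (k * i) * dlt N (i - j))"
definition Yk :: "nat \<Rightarrow> int \<Rightarrow> int mat" where
  "Yk N k = (\<lambda>i j. om N (k * i - k * k * hh N) * dlt N (i - j - k))"

lemma hh_odd: "odd N \<Longrightarrow> 2 * hh N = int N + 1"
  unfolding hh_def PP_def by (auto elim!: oddE)

lemma om_half_om: "om_half N k = om N (k * hh N)"
  unfolding om_half_def hh_def by simp

lemma om_eqI: "N > 0 \<Longrightarrow> x - y = int N * k \<Longrightarrow> om N x = om N y"
  by (rule om_cong) (auto simp: mod_eq_dvd_iff)

lemma finite_Idx[simp]: "finite (Idx N)" unfolding Idx_def by simp

lemma Idx_mod: "N > 0 \<Longrightarrow> x mod int N \<in> Idx N" unfolding Idx_def by simp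

lemma Idx_mod_id: "a \<in> Idx N \<Longrightarrow> a mod int N = a" unfolding Idx_def by simp

lemma dlt_Idx: assumes "a \<in> Idx N" "c \<in> Idx N" shows "dlt N (a - c) = idm a c"
proof -
  have "(a - c) mod int N = 0 \<longleftrightarrow> a mod int N = c mod int N"
    by (simp add: mod_eq_dvd_iff dvd_eq_mod_eq_0[symmetric])
  then show ?thesis using Idx_mod_id[OF assms(1)] Idx_mod_id[OF assms(2)] unfolding dlt_def idm_def by auto
qed

lemma sum_dlt':
  assumes "N > 0"
  shows "(\<Sum>j\<in>Idx N. dlt N (t - j) * f j) = f (t mod int N)"
  using sum_dlt[OF assms, of f t] by (simp add: dlt_sym[of N t] mult.commute)

lemma Zleft1: assumes "N > 0" "a \<in> Idx N" "b \<in> Idx N"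
  shows "mmult (Idx N \<times> Idx N) (kron (Zk N k) idm) M (a, b) q = om N (k * a) * M (a, b) q"
proof -
  have "mmult (Idx N \<times> Idx N) (kron (Zk N k) idm) M (a, b) q = (\<Sum>j\<in>Idx N. om N (k * a) * (dlt N (a - j) * M (j, b) q))"
    unfolding kron_left1[OF finite_Idx assms(3)] Zk_def by (simp add: mult.assoc)
  also have "\<dots> = om N (k * a) * M (a, b) q"
    by (simp add: sum_distrib_left[symmetric] sum_dlt'[OF assms(1)] Idx_mod_id[OF assms(2)])
  finally show ?thesis .
qed

lemma Zleft2: assumes "N > 0" "a \<in> Idx N" "b \<in> Idx N"
  shows "mmult (Idx N \<times> Idx N) (kron idm (Zk N k)) M (a, b) q = om N (k * b) * M (a, b) q"
proof -
  have "mmult (Idx N \<times> Idx N) (kron idm (Zk N k)) M (a, b) q = (\<Sum>j\<in>Idx N. om N (k * b) * (dlt N (b - j) * M (a, j) q))"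
    unfolding kron_left2[OF finite_Idx assms(2)] Zk_def by (simp add: mult.assoc)
  also have "\<dots> = om N (k * b) * M (a, b) q"
    by (simp add: sum_distrib_left[symmetric] sum_dlt'[OF assms(1)] Idx_mod_id[OF assms(3)])
  finally show ?thesis .
qed

lemma Zright1: assumes "N > 0" "c \<in> Idx N" "d \<in> Idx N"
  shows "mmult (Idx N \<times> Idx N) M (kron (Zk N k) idm) p (c, d) = M p (c, d) * om N (k * c)"
proof -
  have "mmult (Idx N \<times> Idx N) M (kron (Zk N k) idm) p (c, d) = (\<Sum>j\<in>Idx N. (M p (j, d) * om N (k * j)) * dlt N (j - c))"
    unfolding kron_right1[OF finite_Idx assms(3)] Zk_def by (simp add: mult.assoc)
  also have "\<dots> = M p (c, d) * om N (k * c)"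
    by (simp add: sum_dlt[OF assms(1)] Idx_mod_id[OF assms(2)])
  finally show ?thesis .
qed

lemma Zright2: assumes "N > 0" "c \<in> Idx N" "d \<in> Idx N"
  shows "mmult (Idx N \<times> Idx N) M (kron idm (Zk N k)) p (c, d) = M p (c, d) * om N (k * d)"
proof -
  have "mmult (Idx N \<times> Idx N) M (kron idm (Zk N k)) p (c, d) = (\<Sum>j\<in>Idx N. (M p (c, j) * om N (k * j)) * dlt N (j - d))"
    unfolding kron_right2[OF finite_Idx assms(2)] Zk_def by (simp add: mult.assoc)
  also have "\<dots> = M p (c, d) * om N (k * d)"
    by (simp add: sum_dlt[OF assms(1)] Idx_mod_id[OF assms(3)])
  finally show ?thesis .
qed

lemma Yleft1: assumes "N > 0" "a \<in> Idx N" "b \<in> Idx N"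
  shows "mmult (Idx N \<times> Idx N) (kron (Yk N k) idm) M (a, b) q
     = om N (k * a - k * k * hh N) * M ((a - k) mod int N, b) q"
proof -
  have "mmult (Idx N \<times> Idx N) (kron (Yk N k) idm) M (a, b) q
     = (\<Sum>j\<in>Idx N. om N (k * a - k * k * hh N) * (dlt N ((a - k) - j) * M (j, b) q))"
    unfolding kron_left1[OF finite_Idx assms(3)] Yk_def by (simp add: mult.assoc algebra_simps)
  also have "\<dots> = om N (k * a - k * k * hh N) * M ((a - k) mod int N, b) q"
    by (simp add: sum_distrib_left[symmetric] sum_dlt'[OF assms(1)])
  finally show ?thesis .
qed

abbreviation "II N \<equiv> Idx N \<times> Idx N"

lemma FZ_fam: assumes "N > 0"
  shows "eqon (II N) (mmult (II N) (kron (Zk N m) idm) (kron (Zk N n) idm)) (kron (Zk N (m + n)) idm)"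
  unfolding eqon_def
proof (intro ballI)
  fix p q assume "p \<in> II N" "q \<in> II N"
  then obtain a b c d where p: "p = (a, b)" "a \<in> Idx N" "b \<in> Idx N" and q: "q = (c, d)" by auto
  show "mmult (II N) (kron (Zk N m) idm) (kron (Zk N n) idm) p q = kron (Zk N (m + n)) idm p q"
    unfolding p q Zleft1[OF assms p(2,3)] by (simp add: kron_def Zk_def distrib_right om_add)
qed

lemma FZ2_fam: assumes "N > 0"
  shows "eqon (II N) (mmult (II N) (kron idm (Zk N m)) (kron idm (Zk N n))) (kron idm (Zk N (m + n)))"
  unfolding eqon_def
proof (intro ballI)
  fix p q assume "p \<in> II N" "q \<in> II N"
  then obtain a b c d where p: "p = (a, b)" "a \<in> Idx N" "b \<in> Idx N" and q: "q = (c, d)" by auto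
  show "mmult (II N) (kron idm (Zk N m)) (kron idm (Zk N n)) p q = kron idm (Zk N (m + n)) p q"
    unfolding p q Zleft2[OF assms p(2,3)] by (simp add: kron_def Zk_def distrib_right om_add)
qed

lemma FZ_0: "eqon (II N) (kron (Zk N 0) idm) idm"
  unfolding eqon_def by (auto simp: kron_def Zk_def dlt_Idx idm_def)

lemma FZ2_0: "eqon (II N) (kron idm (Zk N 0)) idm"
  unfolding eqon_def by (auto simp: kron_def Zk_def dlt_Idx idm_def)

lemma FY_0: "eqon (II N) (kron (Yk N 0) idm) idm"
  unfolding eqon_def by (auto simp: kron_def Yk_def dlt_Idx idm_def)

lemma FY_fam: assumes "N > 0" "odd N"
  shows "eqon (II N) (mmult (II N) (kron (Yk N m) idm) (kron (Yk N n) idm)) (kron (Yk N (m + n)) idm)"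
  unfolding eqon_def
proof (intro ballI)
  fix p q assume "p \<in> II N" "q \<in> II N"
  then obtain a b c d where p: "p = (a, b)" "a \<in> Idx N" "b \<in> Idx N" and q: "q = (c, d)" by auto
  define r where "r = (a - m) mod int N"
  define t where "t = (a - m) div int N"
  have r: "r = a - m - int N * t" unfolding r_def t_def by (simp add: minus_div_mult_eq_mod [symmetric] algebra_simps)
  have H: "2 * hh N = int N + 1" by (rule hh_odd[OF assms(2)])
  have e1: "om N (m * a - m * m * hh N) * om N (n * r - n * n * hh N) = om N ((m + n) * a - (m + n) * (m + n) * hh N)"
    unfolding om_add[symmetric]
    by (rule om_eqI[OF assms(1), where k = "m * n - n * t"]) (use H r in algebra)
  have e2: "dlt N (r - c - n) = dlt N (a - c - (m + n))"
    by (rule dlt_cong) (simp add: r mod_eq_dvd_iff algebra_simps)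
  show "mmult (II N) (kron (Yk N m) idm) (kron (Yk N n) idm) p q = kron (Yk N (m + n)) idm p q"
    unfolding p q Yleft1[OF assms(1) p(2,3)] r_def[symmetric]
    using e1 e2 by (simp add: kron_def Yk_def)
qed

lemma Ym_Yk: assumes "N > 0" "odd N" shows "Ym N = Yk N 1"
proof (intro ext)
  fix i j
  show "Ym N i j = Yk N 1 i j"
  proof (cases "dlt N (i - j - 1) = 0")
    case True then show ?thesis by (simp add: Ym_def Yk_def)
  next
    case False
    then have "int N dvd i - j - 1" unfolding dlt_def by (auto split: if_splits simp: dvd_eq_mod_eq_0)
    then obtain t where t: "i - j - 1 = int N * t" by blast
    have H: "2 * hh N = int N + 1" by (rule hh_odd[OF assms(2)])
    have "om_half N 1 * om N j = om N (1 * i - 1 * 1 * hh N)"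
      unfolding om_half_om om_add[symmetric]
      by (rule om_eqI[OF assms(1), where k = "1 - t"]) (use H t in algebra)
    then show ?thesis by (simp add: Ym_def Yk_def)
  qed
qed

lemma Zm_Zk: "Zm N = Zk N 1"
  by (intro ext) (simp add: Zm_def Zk_def)

lemma EY: assumes "N > 0" "odd N"
  shows "eqon (II N) (ipow (II N) (kron (Ym N) idm) k) (kron (Yk N k) idm)"
  by (rule ipow_family[where F="\<lambda>k. kron (Yk N k) idm"])
     (auto simp: FY_fam[OF assms] FY_0 Ym_Yk[OF assms])

lemma EZ: assumes "N > 0"
  shows "eqon (II N) (ipow (II N) (kron (Zm N) idm) k) (kron (Zk N k) idm)"
  by (rule ipow_family[where F="\<lambda>k. kron (Zk N k) idm"])
     (auto simp: FZ_fam[OF assms] FZ_0 Zm_Zk)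

lemma EZ2: assumes "N > 0"
  shows "eqon (II N) (ipow (II N) (kron idm (Zm N)) k) (kron idm (Zk N k))"
  by (rule ipow_family[where F="\<lambda>k. kron idm (Zk N k)"])
     (auto simp: FZ2_fam[OF assms] FZ2_0 Zm_Zk)

lemma entry:
  assumes N0: "N > 0" and oN: "odd N"
  shows "Rmat_ac N rt ar yr am ym an yn a c (al, be) (ga, de)
    = (yprod N rt ar yr am ym * yprod N rt am ym an yn) ^ PP N * om_half N (a * c)
      * (om N (- a * al - (- a) * (- a) * hh N) * (om N (- c * ((al + a) mod int N))
          * Rmat N rt ar yr am ym an yn ((al + a) mod int N, be) (ga, de)) * om N (c * ga) * om N (- a * de))"
proof -
  define al' where "al' = (al + a) mod int N"
  define t where "t = (al + a) div int N"
  have al': "al' = al + a - int N * t" unfolding al'_def t_def by (simp add: minus_div_mult_eq_mod [symmetric] algebra_simps)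
  have H: "2 * hh N = int N + 1" by (rule hh_odd[OF oN])
  define K where "K = (yprod N rt ar yr am ym * yprod N rt am ym an yn) ^ PP N"
  define yrm where "yrm = yprod N rt ar yr am ym"
  define ymn where "ymn = yprod N rt am ym an yn"
  define yrmn where "yrmn = yprod N rt (ar * am) yrm an yn"
  define H0 where "H0 = hfun N (yrm * ymn / (yrmn * ym))"
  define G where "G = omg N (yrmn * ym) (yr * yn) (yrm * ymn) (ga - a - al)"
  define D where "D = dlt N (ga + de - be)"
  have G': "omg N (yrmn * ym) (yr * yn) (yrm * ymn) (ga - al') = G"
  proof -
    have "(ga - al') mod int N = (ga - a - al) mod int N"
      by (simp add: al' mod_eq_dvd_iff algebra_simps)
    then show ?thesis unfolding G_def omg_def by simp
  qed
  have E: "om N (c * (ga - al)) * om N (- (a * c) * hh N) * om N (al * de) * om N (al\<^sup>2 * hh N)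
     = om N ((a * c) * hh N) * om N (- a * al - (- a) * (- a) * hh N) * om N (- c * al')
       * om N (c * ga) * om N (- a * de) * om N (al' * de) * om N (al'\<^sup>2 * hh N)"
    unfolding om_add[symmetric]
    by (rule om_eqI[OF N0, where k = "- (a * (c + al) + c * t - t * de - 2 * hh N * (al + a) * t + hh N * int N * t * t)"])
       (use H al' in algebra)
  have L: "Rmat_ac N rt ar yr am ym an yn a c (al, be) (ga, de)
     = K * H0 * G * D * (om N (c * (ga - al)) * om N (- (a * c) * hh N) * om N (al * de) * om N (al\<^sup>2 * hh N))"
    unfolding Rmat_ac_def Rmat_def Let_def omg2_def om_half_om
    by (simp add: K_def H0_def G_def D_def yrm_def ymn_def yrmn_def algebra_simps)
  have R: "Rmat N rt ar yr am ym an yn (al', be) (ga, de)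
     = H0 * G * D * (om N (al' * de) * om N (al'\<^sup>2 * hh N))"
    unfolding Rmat_def Let_def omg2_def om_half_om
    by (simp add: H0_def G'[symmetric] D_def yrm_def ymn_def yrmn_def algebra_simps)
  show ?thesis
    unfolding L al'_def[symmetric] R K_def[symmetric] om_half_om
    using E by (simp add: ac_simps)
qed

theorem lemma6p8:
  fixes N :: nat and rt :: "complex \<Rightarrow> complex"
    and ar yr am ym an yn :: complex and a c :: int
  assumes "odd N" and "N \<ge> 3"
    and "\<forall>u. rt u ^ N = u"
    and "ar \<noteq> 0" "yr \<noteq> 0" "am \<noteq> 0" "ym \<noteq> 0" "an \<noteq> 0" "yn \<noteq> 0"
    and "regular_triple N (std_rep N ar yr) (std_rep N am ym) (std_rep N an yn)"
    and "- (yr * yn) / (yprod N rt (ar * am) (yprod N rt ar yr am ym) an yn * ym)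
           = rfun N (yprod N rt ar yr am ym * yprod N rt am ym an yn
                     / (yprod N rt (ar * am) (yprod N rt ar yr am ym) an yn * ym))"
  shows "\<forall>p\<in>Idx N \<times> Idx N. \<forall>q\<in>Idx N \<times> Idx N.
           Rmat_ac N rt ar yr am ym an yn a c p q
         = (yprod N rt ar yr am ym * yprod N rt am ym an yn) ^ PP N * om_half N (a * c)
           * mmult (Idx N \<times> Idx N)
              (mmult (Idx N \<times> Idx N)
                (mmult (Idx N \<times> Idx N)
                  (mmult (Idx N \<times> Idx N)
                     (ipow (Idx N \<times> Idx N) (kron (Ym N) idm) (- a))
                     (ipow (Idx N \<times> Idx N) (kron (Zm N) idm) (- c)))
                  (Rmat N rt ar yr am ym an yn))
                (ipow (Idx N \<times> Idx N) (kron (Zm N) idm) c))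
              (ipow (Idx N \<times> Idx N) (kron idm (Zm N)) (- a)) p q"
proof (intro ballI)
  fix p q assume pq: "p \<in> II N" "q \<in> II N"
  then obtain al be ga de where p: "p = (al, be)" "al \<in> Idx N" "be \<in> Idx N"
    and q: "q = (ga, de)" "ga \<in> Idx N" "de \<in> Idx N" by auto
  have N0: "N > 0" using assms(2) by simp
  define R where "R = Rmat N rt ar yr am ym an yn"
  define M where "M = mmult (II N)
              (mmult (II N)
                (mmult (II N)
                  (mmult (II N)
                     (ipow (II N) (kron (Ym N) idm) (- a))
                     (ipow (II N) (kron (Zm N) idm) (- c)))
                  R)
                (ipow (II N) (kron (Zm N) idm) c))
              (ipow (II N) (kron idm (Zm N)) (- a))"
  define M' where "M' = mmult (II N)
              (mmult (II N)
                (mmult (II N)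
                  (mmult (II N)
                     (kron (Yk N (- a)) idm)
                     (kron (Zk N (- c)) idm))
                  R)
                (kron (Zk N c) idm))
              (kron idm (Zk N (- a)))"
  have "eqon (II N) M M'"
    unfolding M_def M'_def
    by (intro mmult_eqon_cong EY[OF N0 assms(1)] EZ[OF N0] EZ2[OF N0] eqon_refl)
  then have "M p q = M' p q" using pq unfolding eqon_def by blast
  also have "M' p q = mmult (II N) (mmult (II N) (mmult (II N) (kron (Yk N (- a)) idm) (kron (Zk N (- c)) idm)) R) (kron (Zk N c) idm) p q * om N (- a * de)"
    unfolding M'_def q(1) by (rule Zright2[OF N0 q(2,3)])
  also have "\<dots> = mmult (II N) (mmult (II N) (kron (Yk N (- a)) idm) (kron (Zk N (- c)) idm)) R p q * om N (c * ga) * om N (- a * de)"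
    unfolding q(1) Zright1[OF N0 q(2,3)] ..
  also have "\<dots> = mmult (II N) (kron (Yk N (- a)) idm) (mmult (II N) (kron (Zk N (- c)) idm) R) p q * om N (c * ga) * om N (- a * de)"
    by (simp only: mmult_assoc[OF finite_SigmaI[OF finite_Idx finite_Idx]])
  also have "\<dots> = om N (- a * al - (- a) * (- a) * hh N) * (om N (- c * ((al + a) mod int N))
          * R ((al + a) mod int N, be) (ga, de)) * om N (c * ga) * om N (- a * de)"
    unfolding p(1) Yleft1[OF N0 p(2,3)] Zleft1[OF N0 Idx_mod[OF N0] p(3)] by (simp add: q(1))
  finally show "Rmat_ac N rt ar yr am ym an yn a c p q
         = (yprod N rt ar yr am ym * yprod N rt am ym an yn) ^ PP N * om_half N (a * c) * M p q"
    unfolding p(1) q(1) entry[OF N0 assms(1)] R_def by simp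
qed

end
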